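(* Suppose that $X$ is a finite-dimensional real Hilbert space and that $U,V$ are linear subspaces of $X$. Then \[ P_{U+V}=\mathrm{Id}-2P_{U^\perp}(P_{U^\perp}+P_{V^\perp})^\dagger P_{V^\perp}=\mathrm{Id}-2(\mathrm{Id}-P_U)\big(2\mathrm{Id}-P_U-P_V\big)^\dagger(\mathrm{Id}-P_V). \]
   Context: $P_S$ denotes the orthogonal projection onto $S$, and $A^\dagger$ denotes the Moore-Penrose inverse of the linear map $A$. *)

theory Defs
  imports "HOL-Analysis.Analysis"
begin

definition orth_proj :: "'a::euclidean_space set \<Rightarrow> 'a \<Rightarrow> 'a" where
  "orth_proj S x = (THE p. p \<in> S \<and> x - p \<in> orthogonal_comp S)"

definition moore_penrose :: "('a::euclidean_space \<Rightarrow> 'b::euclidean_space) \<Rightarrow> 'b \<Rightarrow> 'a" where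
  "moore_penrose A = (THE B. linear B \<and> A \<circ> B \<circ> A = A \<and> B \<circ> A \<circ> B = B \<and>
      (\<forall>x y. A (B x) \<bullet> y = x \<bullet> A (B y)) \<and> (\<forall>x y. B (A x) \<bullet> y = x \<bullet> B (A y)))"

end

theory Submission imports Defs begin

lemma proj_unique:
  fixes S :: "'a::euclidean_space set"
  assumes "subspace S" "p \<in> S" "x - p \<in> orthogonal_comp S"
  shows "orth_proj S x = p"
  unfolding orth_proj_def
proof (rule the_equality)
  show "p \<in> S \<and> x - p \<in> orthogonal_comp S" using assms by auto
next
  fix q assume q: "q \<in> S \<and> x - q \<in> orthogonal_comp S"
  have "p - q \<in> S" using assms q by (simp add: subspace_diff)
  moreover have "(x - q) - (x - p) \<in> orthogonal_comp S"
    using assms q subspace_diff[OF subspace_orthogonal_comp, of "x - q" S "x - p"] by simp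
  ultimately have "orthogonal (p - q) (p - q)"
    by (auto simp: orthogonal_comp_def)
  then show "q = p" by (simp add: orthogonal_def)
qed

lemma proj_ex:
  fixes S :: "'a::euclidean_space set"
  assumes "subspace S"
  shows "orth_proj S x \<in> S \<and> x - orth_proj S x \<in> orthogonal_comp S"
proof -
  obtain y z where y: "y \<in> span S" and z: "\<And>w. w \<in> span S \<Longrightarrow> orthogonal z w" and "x = y + z"
    using orthogonal_subspace_decomp_exists[of S x] by metis
  have yS: "y \<in> S" using y assms by (metis span_eq_iff)
  have "x - y \<in> orthogonal_comp S" using z \<open>x = y + z\<close>
    by (auto simp: orthogonal_comp_def orthogonal_commute span_base)
  then have "orth_proj S x = y" using proj_unique[OF assms yS] by blast
  then show ?thesis using yS \<open>x - y \<in> _\<close> by simp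
qed

lemma proj_in: "subspace S \<Longrightarrow> orth_proj S x \<in> S"
  using proj_ex by blast
lemma proj_perp: "subspace S \<Longrightarrow> x - orth_proj S x \<in> orthogonal_comp S"
  using proj_ex by blast

lemma comp_inner: "y \<in> orthogonal_comp S \<Longrightarrow> s \<in> S \<Longrightarrow> s \<bullet> y = 0"
  by (auto simp: orthogonal_comp_def orthogonal_def)

lemma proj_linear:
  fixes S :: "'a::euclidean_space set"
  assumes "subspace S" shows "linear (orth_proj S)"
proof
  fix x y
  show "orth_proj S (x + y) = orth_proj S x + orth_proj S y"
    apply (rule proj_unique[OF assms])
    using proj_in[OF assms] proj_perp[OF assms, of x] proj_perp[OF assms, of y]
     apply (simp add: assms subspace_add)
    using subspace_add[OF subspace_orthogonal_comp, of "x - orth_proj S x" S "y - orth_proj S y"]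
     proj_perp[OF assms, of x] proj_perp[OF assms, of y]
    by (metis (no_types, lifting) add_diff_add)
next
  fix c x
  show "orth_proj S (c *\<^sub>R x) = c *\<^sub>R orth_proj S x"
    apply (rule proj_unique[OF assms])
    using proj_in[OF assms] apply (simp add: assms subspace_scale)
    using subspace_scale[OF subspace_orthogonal_comp proj_perp[OF assms, of x], of c]
    by (simp add: algebra_simps)
qed

lemma proj_id: "subspace S \<Longrightarrow> x \<in> S \<Longrightarrow> orth_proj S x = x"
  by (rule proj_unique) (auto simp: orthogonal_comp_def orthogonal_def)

lemma proj_zero: "subspace S \<Longrightarrow> x \<in> orthogonal_comp S \<Longrightarrow> orth_proj S x = 0"
  by (rule proj_unique) (auto simp: subspace_0)

lemma proj_idem: "subspace S \<Longrightarrow> orth_proj S (orth_proj S x) = orth_proj S x"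
  by (simp add: proj_id proj_in)

lemma proj_sym:
  assumes "subspace S" shows "orth_proj S x \<bullet> y = x \<bullet> orth_proj S y"
proof -
  have "orth_proj S x \<bullet> (y - orth_proj S y) = 0"
    using comp_inner[OF proj_perp[OF assms] proj_in[OF assms]] .
  moreover have "(x - orth_proj S x) \<bullet> orth_proj S y = 0"
    using comp_inner[OF proj_perp[OF assms] proj_in[OF assms]] by (simp add: inner_commute)
  ultimately show ?thesis by (simp add: inner_diff_left inner_diff_right inner_commute)
qed

lemma proj_comp:
  assumes "subspace S" shows "orth_proj (orthogonal_comp S) x = x - orth_proj S x"
  apply (rule proj_unique[OF subspace_orthogonal_comp proj_perp[OF assms]])
  using proj_in[OF assms] by (auto simp: orthogonal_comp_def orthogonal_commute)

lemma proj_sq: "subspace S \<Longrightarrow> orth_proj S x \<bullet> x = (norm (orth_proj S x))^2"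
  by (metis proj_idem proj_sym power2_norm_eq_inner)


lemma inner_ext: "(\<And>y. a \<bullet> y = b \<bullet> (y::'a::real_inner)) \<Longrightarrow> a = b"
  by (metis inner_diff_left right_minus_eq inner_eq_zero_iff)

lemma mp_eq:
  fixes A :: "'a::euclidean_space \<Rightarrow> 'b::euclidean_space"
  assumes lB: "linear B" and c1: "\<And>x. A (B (A x)) = A x" and c2: "\<And>x. B (A (B x)) = B x"
    and c3: "\<And>x y. A (B x) \<bullet> y = x \<bullet> A (B y)" and c4: "\<And>x y. B (A x) \<bullet> y = x \<bullet> B (A y)"
  shows "moore_penrose A = B"
  unfolding moore_penrose_def
proof (rule the_equality)
  show "linear B \<and> A \<circ> B \<circ> A = A \<and> B \<circ> A \<circ> B = B \<and>
      (\<forall>x y. A (B x) \<bullet> y = x \<bullet> A (B y)) \<and> (\<forall>x y. B (A x) \<bullet> y = x \<bullet> B (A y))"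
    using assms by (auto simp: fun_eq_iff)
next
  fix C assume "linear C \<and> A \<circ> C \<circ> A = A \<and> C \<circ> A \<circ> C = C \<and>
      (\<forall>x y. A (C x) \<bullet> y = x \<bullet> A (C y)) \<and> (\<forall>x y. C (A x) \<bullet> y = x \<bullet> C (A y))"
  then have d1: "\<And>x. A (C (A x)) = A x" and d2: "\<And>x. C (A (C x)) = C x"
    and d3: "\<And>x y. A (C x) \<bullet> y = x \<bullet> A (C y)" and d4: "\<And>x y. C (A x) \<bullet> y = x \<bullet> C (A y)"
    by (auto simp: fun_eq_iff)
  have AB: "A (B x) = A (C x)" for x
  proof (rule inner_ext)
    fix y
    have "A (B x) \<bullet> y = A (C (A (B x))) \<bullet> y" by (simp add: d1)
    also have "\<dots> = A (B x) \<bullet> A (C y)" by (simp add: d3)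
    also have "\<dots> = x \<bullet> A (B (A (C y)))" by (simp add: c3)
    also have "\<dots> = x \<bullet> A (C y)" by (simp add: c1)
    also have "\<dots> = A (C x) \<bullet> y" by (simp add: d3)
    finally show "A (B x) \<bullet> y = A (C x) \<bullet> y" .
  qed
  have BA: "B (A x) = C (A x)" for x
  proof (rule inner_ext)
    fix y
    have "B (A x) \<bullet> y = B (A (C (A x))) \<bullet> y" by (simp add: d1)
    also have "\<dots> = C (A x) \<bullet> B (A y)" by (simp add: c4)
    also have "\<dots> = x \<bullet> C (A (B (A y)))" by (simp add: d4)
    also have "\<dots> = x \<bullet> C (A y)" by (simp add: c1)
    also have "\<dots> = C (A x) \<bullet> y" by (simp add: d4)
    finally show "B (A x) \<bullet> y = C (A x) \<bullet> y" .
  qed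
  show "C = B"
  proof
    fix x
    have "B x = B (A (B x))" by (simp add: c2)
    also have "\<dots> = B (A (C x))" by (simp add: AB)
    also have "\<dots> = C (A (C x))" by (simp add: BA)
    also have "\<dots> = C x" by (simp add: d2)
    finally show "C x = B x" by simp
  qed
qed


lemma comp_sub: "subspace S \<Longrightarrow> y \<in> orthogonal_comp S \<Longrightarrow> K \<subseteq> S \<Longrightarrow> y \<in> orthogonal_comp K"
  by (auto simp: orthogonal_comp_def)

theorem mainTheorem4:
  fixes U V :: "'a::euclidean_space set"
  assumes "subspace U" and "subspace V"
  shows "orth_proj {u + v | u v. u \<in> U \<and> v \<in> V}
           = (\<lambda>x. x - 2 *\<^sub>R orth_proj (orthogonal_comp U)
                 (moore_penrose (\<lambda>y. orth_proj (orthogonal_comp U) y + orth_proj (orthogonal_comp V) y)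
                   (orth_proj (orthogonal_comp V) x)))
       \<and> (\<lambda>x. x - 2 *\<^sub>R orth_proj (orthogonal_comp U)
                 (moore_penrose (\<lambda>y. orth_proj (orthogonal_comp U) y + orth_proj (orthogonal_comp V) y)
                   (orth_proj (orthogonal_comp V) x)))
         = (\<lambda>x. x - 2 *\<^sub>R (\<lambda>z. z - orth_proj U z)
                 (moore_penrose (\<lambda>y. 2 *\<^sub>R y - orth_proj U y - orth_proj V y)
                   (x - orth_proj V x)))"
proof -
  note sU = assms(1) and sV = assms(2)
  have sUc: "subspace (orthogonal_comp U)" and sVc: "subspace (orthogonal_comp V)"
    by (rule subspace_orthogonal_comp)+
  define A where "A = orth_proj (orthogonal_comp U)"
  define B where "B = orth_proj (orthogonal_comp V)"
  define K where "K = U \<inter> V"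
  define PK where "PK = orth_proj K"
  define S where "S = (\<lambda>y. A y + B y)"
  have sK: "subspace K" unfolding K_def using sU sV by (rule subspace_inter)
  have lA: "linear A" unfolding A_def by (rule proj_linear[OF sUc])
  have lB: "linear B" unfolding B_def by (rule proj_linear[OF sVc])
  have lPK: "linear PK" unfolding PK_def by (rule proj_linear[OF sK])
  have lS: "linear S" unfolding S_def using lA lB by (simp add: linear_compose_add)
  have Aeq: "A y = y - orth_proj U y" for y unfolding A_def by (rule proj_comp[OF sU])
  have Beq: "B y = y - orth_proj V y" for y unfolding B_def by (rule proj_comp[OF sV])
  have Ain: "A y \<in> orthogonal_comp U" for y unfolding A_def using proj_in[OF sUc] .
  have Bin: "B y \<in> orthogonal_comp V" for y unfolding B_def using proj_in[OF sVc] .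
  have Asym: "A x \<bullet> y = x \<bullet> A y" for x y unfolding A_def by (rule proj_sym[OF sUc])
  have Bsym: "B x \<bullet> y = x \<bullet> B y" for x y unfolding B_def by (rule proj_sym[OF sVc])
  have PKsym: "PK x \<bullet> y = x \<bullet> PK y" for x y unfolding PK_def by (rule proj_sym[OF sK])
  have PKin: "PK y \<in> K" for y unfolding PK_def using proj_in[OF sK] .
  have PKidem: "PK (PK y) = PK y" for y unfolding PK_def using proj_idem[OF sK] .
  have Azero: "A k = 0" if "k \<in> U" for k
    unfolding A_def using proj_zero[OF sUc] orthogonal_comp_subset that by blast
  have Bzero: "B k = 0" if "k \<in> V" for k
    unfolding B_def using proj_zero[OF sVc] orthogonal_comp_subset that by blast
  have APK: "A (PK y) = 0" for y using PKin Azero K_def by blast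
  have BPK: "B (PK y) = 0" for y using PKin Bzero K_def by blast
  have SPK: "S (PK y) = 0" for y by (simp add: S_def APK BPK)
  have PKA: "PK (A y) = 0" for y
    unfolding PK_def by (rule proj_zero[OF sK comp_sub[OF sU Ain]]) (auto simp: K_def)
  have PKB: "PK (B y) = 0" for y
    unfolding PK_def by (rule proj_zero[OF sK comp_sub[OF sV Bin]]) (auto simp: K_def)
  have PKS: "PK (S y) = 0" for y unfolding S_def using PKA PKB linear_add[OF lPK] by simp
  have Ssym: "S x \<bullet> y = x \<bullet> S y" for x y
    by (simp add: S_def inner_add_left inner_add_right Asym Bsym)
  have Sker: "x \<in> K" if "S x = 0" for x
  proof -
    have "0 = S x \<bullet> x" using that by simp
    also have "\<dots> = (norm (A x))^2 + (norm (B x))^2"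
      unfolding S_def inner_add_left A_def B_def using proj_sq[OF sUc] proj_sq[OF sVc] by simp
    finally have "A x = 0" "B x = 0"
      by (smt (verit) norm_eq_zero power2_eq_square zero_le_power2 power_eq_0_iff)+
    then have "x = orth_proj U x" "x = orth_proj V x" using Aeq Beq by auto
    then show ?thesis unfolding K_def using proj_in[OF sU, of x] proj_in[OF sV, of x] by simp
  qed
  define S' where "S' = (\<lambda>x. S x + PK x)"
  have lS': "linear S'" unfolding S'_def using lS lPK by (simp add: linear_compose_add)
  have "inj S'"
    unfolding linear_injective_0[OF lS']
  proof (intro allI impI)
    fix x assume "S' x = 0"
    then have e: "S x = - PK x" by (simp add: S'_def eq_neg_iff_add_eq_0)
    have "PK x = 0" using arg_cong[OF e, of PK] PKS PKidem linear_neg[OF lPK] by (metis neg_equal_0_iff_equal)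
    then have "S x = 0" using e by simp
    then have "x \<in> K" by (rule Sker)
    then show "x = 0" using \<open>PK x = 0\<close> proj_id[OF sK] PK_def by metis
  qed
  then obtain G where lG: "linear G" and GS: "\<And>x. G (S' x) = x" and SG: "\<And>x. S' (G x) = x"
    using linear_injective_isomorphism[OF lS'] by blast
  have S'sym: "S' x \<bullet> y = x \<bullet> S' y" for x y
    by (simp add: S'_def inner_add_left inner_add_right Ssym PKsym)
  have Gsym: "G x \<bullet> y = x \<bullet> G y" for x y
    by (metis S'sym SG)
  have GPK: "G (PK y) = PK y" for y
  proof -
    have "S' (PK y) = PK y" by (simp add: S'_def SPK PKidem)
    then show ?thesis by (metis GS)
  qed
  define T where "T = (\<lambda>x. G (x - PK x))"
  have lW: "linear (\<lambda>x. x - PK x)"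
    using linear_compose_sub[OF linear_id lPK] by (simp add: id_def)
  have lT: "linear T" unfolding T_def
    using linear_compose[OF lW lG] by (simp add: o_def)
  have Teq: "T x = G x - PK x" for x unfolding T_def by (simp add: linear_diff[OF lG] GPK)
  have S'S: "S' (x - PK x) = S x" for x
    by (simp add: S'_def linear_diff[OF lS] linear_diff[OF lPK] SPK PKidem)
  have TS: "T (S x) = x - PK x" for x
    unfolding T_def by (simp add: PKS) (metis S'S GS)
  have ST: "S (T x) = x - PK x" for x
  proof -
    define z where "z = G (x - PK x)"
    have "S' z = x - PK x" by (simp add: z_def SG)
    then have "PK (S' z) = 0" by (simp add: linear_diff[OF lPK] PKidem)
    then have "PK z = 0" by (simp add: S'_def linear_add[OF lPK] PKS PKidem)
    then show ?thesis using \<open>S' z = x - PK x\<close> by (simp add: T_def z_def[symmetric] S'_def)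
  qed
  have Tsym: "T x \<bullet> y = x \<bullet> T y" for x y
    by (simp add: Teq inner_diff_left inner_diff_right Gsym PKsym)
  have mp: "moore_penrose S = T"
  proof (rule mp_eq[OF lT])
    show "S (T (S x)) = S x" for x by (simp add: TS linear_diff[OF lS] SPK)
    show "T (S (T x)) = T x" for x unfolding ST by (simp add: T_def linear_diff[OF lPK] PKidem)
    show "S (T x) \<bullet> y = x \<bullet> S (T y)" for x y
      by (simp add: ST inner_diff_left inner_diff_right PKsym)
    show "T (S x) \<bullet> y = x \<bullet> T (S y)" for x y
      by (simp add: TS inner_diff_left inner_diff_right PKsym)
  qed
  have ATS: "A (T (S y)) = A y" for y by (simp add: TS linear_diff[OF lA] APK)
  have STB: "S (T (B y)) = B y" for y by (simp add: ST PKB)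
  have Q1: "A (T (B x)) = A x - A (T (A x))" for x
  proof -
    have "B x = S x - A x" by (simp add: S_def)
    then show ?thesis by (simp add: linear_diff[OF lT] linear_diff[OF lA] ATS)
  qed
  have Qsym: "A (T (B x)) \<bullet> y = x \<bullet> A (T (B y))" for x y
    by (simp add: Q1 inner_diff_left inner_diff_right Asym Tsym)
  have Qeq: "A (T (B x)) = B (T (A x))" for x
  proof (rule inner_ext)
    fix y
    have "B (T (A x)) \<bullet> y = x \<bullet> A (T (B y))" by (simp add: Asym Bsym Tsym)
    then show "A (T (B x)) \<bullet> y = B (T (A x)) \<bullet> y" by (simp add: Qsym)
  qed
  have sUV: "subspace {u + v | u v. u \<in> U \<and> v \<in> V}" using subspace_sums[OF sU sV] .
  have main: "orth_proj {u + v | u v. u \<in> U \<and> v \<in> V} x = x - 2 *\<^sub>R A (T (B x))" for x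
  proof (rule proj_unique[OF sUV])
    define u where "u = PK x + (T (B x) - A (T (B x)))"
    define v where "v = T (A x) - B (T (A x))"
    have "u \<in> U"
      unfolding u_def using PKin[of x] proj_in[OF sU, of "T (B x)"] Aeq[of "T (B x)"]
      by (simp add: K_def sU subspace_add)
    moreover have "v \<in> V"
      unfolding v_def using proj_in[OF sV, of "T (A x)"] Beq[of "T (A x)"] by simp
    moreover have "x - 2 *\<^sub>R A (T (B x)) = u + v"
    proof -
      have "T (B x) + T (A x) = x - PK x" using TS[of x] by (simp add: S_def linear_add[OF lT] add.commute)
      then show ?thesis unfolding u_def v_def using Qeq[of x] by (simp add: algebra_simps scaleR_2)
    qed
    ultimately show "x - 2 *\<^sub>R A (T (B x)) \<in> {u + v | u v. u \<in> U \<and> v \<in> V}" by blast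
    show "x - (x - 2 *\<^sub>R A (T (B x))) \<in> orthogonal_comp {u + v | u v. u \<in> U \<and> v \<in> V}"
    proof -
      have "(u + v) \<bullet> (2 *\<^sub>R A (T (B x))) = 0" if "u \<in> U" "v \<in> V" for u v
      proof -
        have "u \<bullet> A (T (B x)) = 0" using comp_inner[OF Ain that(1)] .
        moreover have "v \<bullet> B (T (A x)) = 0" using comp_inner[OF Bin that(2)] .
        ultimately show ?thesis by (simp add: inner_add_left Qeq)
      qed
      then show ?thesis by (auto simp: orthogonal_comp_def orthogonal_def)
    qed
  qed
  have e1: "(\<lambda>y. 2 *\<^sub>R y - orth_proj U y - orth_proj V y) = S"
    by (auto simp: fun_eq_iff S_def Aeq Beq scaleR_2 algebra_simps)
  have e2: "(\<lambda>z. z - orth_proj U z) = A" by (auto simp: fun_eq_iff Aeq)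
  have e3: "(\<lambda>x. x - orth_proj V x) = B" by (auto simp: fun_eq_iff Beq)
  have m2: "moore_penrose (\<lambda>y. orth_proj (orthogonal_comp U) y + orth_proj (orthogonal_comp V) y) = T"
    using mp by (simp add: S_def A_def B_def)
  show ?thesis
    unfolding m2 e1 e2 e3 mp unfolding A_def[symmetric] B_def[symmetric]
    using main by (auto simp: fun_eq_iff Aeq Beq[symmetric])
qed

end
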